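(* Let $T$ be a lifted graph, $F\colon T\to T$ a continuous sun-like map of degree 1, ${\cal P}$ a basic partition of $F$ and ${\cal G}$ its covering graph. (i) Let $\gamma_1,\gamma_2$ be two loops in ${\cal G}$ starting at the same vertex $\alpha$. If $r\in[\rho(\widetilde\gamma_1),\rho(\widetilde\gamma_2)]\cap\mathbb Q$, then there exists a loop $\gamma$ starting at $\alpha$ with $\rho(\widetilde\gamma)=r$. (ii) Let $\alpha$ be a vertex of ${\cal G}$ and, for every $n\ge0$, let $\gamma_n$ be a loop in ${\cal G}$ starting at $\alpha$. If $\lim_{n\to\infty}\rho(\widetilde\gamma_n)=s\in\mathbb R$, then there exists an infinite path $\bar\alpha=(\alpha_n)_{n\ge0}$ in ${\cal G}$ with $\alpha_0=\alpha$, $\alpha_n=\alpha$ for infinitely many $n$, and $\rho(\bar\alpha)=s$.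
   Context: A lifted graph is a connected topological space $T$ with a homeomorphism $h\colon\mathbb R\to h(\mathbb R)\subset T$ and a homeomorphism $\tau\colon T\to T$ such that $\tau(h(x))=h(x+1)$, the closure of each connected component of $T\setminus h(\mathbb R)$ is a topological finite graph meeting $h(\mathbb R)$ in exactly one point, and only finitely many such components have closure meeting $h([0,1])$. Identify $h(\mathbb R)$ with $\mathbb R$, write $x+m:=\tau^m(x)$; $r_{\mathbb R}\colon T\to\mathbb R$ is the identity on $\mathbb R$ and maps a component $C$ of $T\setminus\mathbb R$ to the point $\overline C\cap\mathbb R$. $F$ has degree 1 if $F(x+1)=F(x)+1$. Let $T_{\mathbb R}:=\overline{\bigcup_{n\ge0}F^n(\mathbb R)}$, $X:=\overline{T\setminus T_{\mathbb R}}\cap r_{\mathbb R}^{-1}([0,1))$. $F$ is sun-like if $(T\setminus T_{\mathbb R})\cap r_{\mathbb R}^{-1}([0,1))$ consists of finitely many intervals with pairwise disjoint closures $X^i$, $i\in\Lambda$ (branches), each a compact interval meeting $T_{\mathbb R}$ in one endpoint $\min X^i$ (fixing the order of $X^i$). A basic partition is a finite family ${\cal P}=\{X^i_j\}$ of pairwise disjoint nonempty compact intervals $X^i_1<\dots<X^i_{N_i}$ in $X^i$, with $\ell(X^i_j)\in\Lambda$, $p(X^i_j)\in\mathbb Z$, such that $F(X^i_j)\subset(X^{\ell(X^i_j)}+p(X^i_j))\cup\mathrm{Int}(T_{\mathbb R})$, $F(\min X^i_j)=\min X^{\ell(X^i_j)}+p(X^i_j)$, and $F(X\setminus\bigcup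 X^i_j)\cap(X+\mathbb Z)=\emptyset$. For $A_0,\dots,A_n\in{\cal P}$, $\langle A_0\dots A_n\rangle:=F^n(\{x\in T: F^i(x)\in A_i+\mathbb Z,\ 0\le i\le n\})\cap X$. $A_0\dots A_n\sim B_0\dots B_m$ iff for some $k\le\min(n,m)$, $A_{n-i}=B_{m-i}$ ($0\le i\le k$) and $\langle A_0\dots A_{n-k}\rangle=A_{n-k}=B_{m-k}=\langle B_0\dots B_{m-k}\rangle$. The covering graph ${\cal G}$: vertices are classes $A_0\dots A_n/\!\sim$ with $\langle A_0\dots A_n\rangle\ne\emptyset$; arrow $\alpha\to\beta$ iff $\alpha=A_0\dots A_n/\!\sim$, $\beta=A_0\dots A_nA_{n+1}/\!\sim$ for some $A_i\in{\cal P}$. The weight of an arrow $\alpha\to\beta$ is $W(\alpha\beta):=p(A)$ with $A\in{\cal P}$ the unique element containing $\langle\alpha\rangle$. A finite path $\alpha_0\dots\alpha_n$ ($\alpha_i\to\alpha_{i+1}$) has length $n$ and weight $W(\alpha_0\dots\alpha_n):=\sum_{i<n}W(\alpha_i\alpha_{i+1})$; a loop starting at $\alpha$ is a finite path of positive length with $\alpha_0=\alpha_n=\alpha$; $\widetilde\gamma$ denotes the infinite path obtained by concatenating the loop $\gamma$ with itself infinitely many times. For an infinite path $\bar\alpha=(\alpha_n)_{n\ge0}$, $\rho(\bar\alpha):=\lim_{n\to\infty}W(\alpha_0\dots\alpha_n)/n$ when the limit exists. *)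

theory Defs
  imports "HOL-Analysis.Analysis"
begin

definition finite_top_graph :: "'a::topological_space set \<Rightarrow> bool" where
  "finite_top_graph G \<longleftrightarrow> (\<exists>gs::(real \<Rightarrow> 'a) list.
     G = (\<Union>g\<in>set gs. g ` {0..1}) \<and>
     (\<forall>g\<in>set gs. (\<exists>g'. homeomorphism {0..1} (g ` {0..1}) g g')
                   \<and> closedin (top_of_set G) (g ` {0..1})) \<and>
     (\<forall>g\<in>set gs. \<forall>g'\<in>set gs. g \<noteq> g' \<longrightarrow>
         g ` {0..1} \<inter> g' ` {0..1} \<subseteq> {g 0, g 1} \<inter> {g' 0, g' 1}))"

text \<open>The whole type is the space T; h embeds the real line, tau is the translation.\<close>
definition lifted_graph :: "(real \<Rightarrow> 'a::topological_space) \<Rightarrow> ('a \<Rightarrow> 'a) \<Rightarrow> bool" where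
  "lifted_graph h \<tau> \<longleftrightarrow>
     connected (UNIV::'a set) \<and>
     (\<exists>h'. homeomorphism UNIV (range h) h h') \<and>
     (\<exists>\<tau>'. homeomorphism UNIV UNIV \<tau> \<tau>') \<and>
     (\<forall>x. \<tau> (h x) = h (x + 1)) \<and>
     (\<forall>x. x \<notin> range h \<longrightarrow>
        finite_top_graph (closure (connected_component_set (- range h) x)) \<and>
        (\<exists>!t. h t \<in> closure (connected_component_set (- range h) x))) \<and>
     finite {connected_component_set (- range h) x | x. x \<notin> range h \<and>
               closure (connected_component_set (- range h) x) \<inter> h ` {0..1} \<noteq> {}}"

text \<open>x + m := tau^m(x) for integer m.\<close>
definition tshift :: "('a \<Rightarrow> 'a) \<Rightarrow> int \<Rightarrow> 'a \<Rightarrow> 'a" where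
  "tshift \<tau> m = (if 0 \<le> m then \<tau> ^^ nat m else inv \<tau> ^^ nat (- m))"

text \<open>The retraction r_R : T -> R (values in R, i.e. parameters of h).\<close>
definition rR :: "(real \<Rightarrow> 'a::topological_space) \<Rightarrow> 'a \<Rightarrow> real" where
  "rR h x = (if x \<in> range h then inv h x
             else (THE t. h t \<in> closure (connected_component_set (- range h) x)))"

definition TR :: "(real \<Rightarrow> 'a::topological_space) \<Rightarrow> ('a \<Rightarrow> 'a) \<Rightarrow> 'a set" where
  "TR h F = closure (\<Union>n. (F ^^ n) ` range h)"

definition Xset :: "(real \<Rightarrow> 'a::topological_space) \<Rightarrow> ('a \<Rightarrow> 'a) \<Rightarrow> 'a set" where
  "Xset h F = closure (- TR h F) \<inter> {x. rR h x \<in> {0..<1}}"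

text \<open>Branches X^i = phi i ` {0..1}, with phi i a homeomorphism from [0,1] onto X^i,
  phi i 0 = min X^i (the order on X^i is the one transported by phi i).\<close>
definition sun_like :: "(real \<Rightarrow> 'a::topological_space) \<Rightarrow> ('a \<Rightarrow> 'a) \<Rightarrow> 'b set
                        \<Rightarrow> ('b \<Rightarrow> real \<Rightarrow> 'a) \<Rightarrow> bool" where
  "sun_like h F \<Lambda> \<phi> \<longleftrightarrow>
     finite \<Lambda> \<and>
     (- TR h F) \<inter> {x. rR h x \<in> {0..<1}} = (\<Union>i\<in>\<Lambda>. \<phi> i ` {0<..1}) \<and>
     (\<forall>i\<in>\<Lambda>. (\<exists>\<psi>. homeomorphism {0..1} (\<phi> i ` {0..1}) (\<phi> i) \<psi>) \<and>
               closure (\<phi> i ` {0<..1}) = \<phi> i ` {0..1} \<and>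
               \<phi> i ` {0..1} \<inter> TR h F = {\<phi> i 0}) \<and>
     (\<forall>i\<in>\<Lambda>. \<forall>j\<in>\<Lambda>. i \<noteq> j \<longrightarrow> \<phi> i ` {0..1} \<inter> \<phi> j ` {0..1} = {})"

definition basic_partition :: "(real \<Rightarrow> 'a::topological_space) \<Rightarrow> ('a \<Rightarrow> 'a) \<Rightarrow> ('a \<Rightarrow> 'a)
     \<Rightarrow> 'b set \<Rightarrow> ('b \<Rightarrow> real \<Rightarrow> 'a) \<Rightarrow> 'a set set \<Rightarrow> ('a set \<Rightarrow> 'b) \<Rightarrow> ('a set \<Rightarrow> int) \<Rightarrow> bool" where
  "basic_partition h \<tau> F \<Lambda> \<phi> P lab p \<longleftrightarrow>
     finite P \<and>
     (\<forall>A\<in>P. \<forall>B\<in>P. A \<noteq> B \<longrightarrow> A \<inter> B = {}) \<and>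
     (\<forall>A\<in>P. lab A \<in> \<Lambda> \<and>
        (\<exists>i\<in>\<Lambda>. \<exists>a b. 0 \<le> a \<and> a \<le> b \<and> b \<le> 1 \<and> A = \<phi> i ` {a..b} \<and>
              F (\<phi> i a) = tshift \<tau> (p A) (\<phi> (lab A) 0)) \<and>
        F ` A \<subseteq> (tshift \<tau> (p A) ` \<phi> (lab A) ` {0..1}) \<union> interior (TR h F)) \<and>
     F ` (Xset h F - \<Union>P) \<inter> (\<Union>m. tshift \<tau> m ` Xset h F) = {}"

text \<open>Cylinder <A_0 ... A_n> for a nonempty word w = [A_0,...,A_n].\<close>
definition cyl :: "(real \<Rightarrow> 'a::topological_space) \<Rightarrow> ('a \<Rightarrow> 'a) \<Rightarrow> ('a \<Rightarrow> 'a)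
                   \<Rightarrow> 'a set list \<Rightarrow> 'a set" where
  "cyl h \<tau> F w = (F ^^ (length w - 1)) `
      {x. \<forall>i<length w. (F ^^ i) x \<in> (\<Union>m. tshift \<tau> m ` (w ! i))} \<inter> Xset h F"

definition word_sim :: "(real \<Rightarrow> 'a::topological_space) \<Rightarrow> ('a \<Rightarrow> 'a) \<Rightarrow> ('a \<Rightarrow> 'a)
                        \<Rightarrow> 'a set list \<Rightarrow> 'a set list \<Rightarrow> bool" where
  "word_sim h \<tau> F w v \<longleftrightarrow>
     (let n = length w - 1; m = length v - 1 in
      \<exists>k\<le>min n m. (\<forall>i\<le>k. w ! (n - i) = v ! (m - i)) \<and>
        cyl h \<tau> F (take (n - k + 1) w) = w ! (n - k) \<and>
        w ! (n - k) = v ! (m - k) \<and>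
        v ! (m - k) = cyl h \<tau> F (take (m - k + 1) v))"

definition cls :: "(real \<Rightarrow> 'a::topological_space) \<Rightarrow> ('a \<Rightarrow> 'a) \<Rightarrow> ('a \<Rightarrow> 'a)
                   \<Rightarrow> 'a set set \<Rightarrow> 'a set list \<Rightarrow> 'a set list set" where
  "cls h \<tau> F P w = {v. v \<in> lists P \<and> v \<noteq> [] \<and> word_sim h \<tau> F w v}"

definition cg_vertices :: "(real \<Rightarrow> 'a::topological_space) \<Rightarrow> ('a \<Rightarrow> 'a) \<Rightarrow> ('a \<Rightarrow> 'a)
                   \<Rightarrow> 'a set set \<Rightarrow> 'a set list set set" where
  "cg_vertices h \<tau> F P =
     {cls h \<tau> F P w | w. w \<in> lists P \<and> w \<noteq> [] \<and> cyl h \<tau> F w \<noteq> {}}"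

definition cg_arrow :: "(real \<Rightarrow> 'a::topological_space) \<Rightarrow> ('a \<Rightarrow> 'a) \<Rightarrow> ('a \<Rightarrow> 'a)
                   \<Rightarrow> 'a set set \<Rightarrow> 'a set list set \<Rightarrow> 'a set list set \<Rightarrow> bool" where
  "cg_arrow h \<tau> F P \<alpha> \<beta> \<longleftrightarrow>
     (\<exists>w a. w \<in> lists P \<and> w \<noteq> [] \<and> a \<in> P \<and>
        cyl h \<tau> F w \<noteq> {} \<and> cyl h \<tau> F (w @ [a]) \<noteq> {} \<and>
        \<alpha> = cls h \<tau> F P w \<and> \<beta> = cls h \<tau> F P (w @ [a]))"

text \<open>Weight of an arrow out of alpha: p(A), A the element of P containing <alpha>
  (it depends only on the source vertex alpha).\<close>
definition cg_weight :: "(real \<Rightarrow> 'a::topological_space) \<Rightarrow> ('a \<Rightarrow> 'a) \<Rightarrow> ('a \<Rightarrow> 'a)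
                   \<Rightarrow> 'a set set \<Rightarrow> ('a set \<Rightarrow> int) \<Rightarrow> 'a set list set \<Rightarrow> int" where
  "cg_weight h \<tau> F P p \<alpha> = p (THE A. A \<in> P \<and> cyl h \<tau> F (SOME w. w \<in> \<alpha>) \<subseteq> A)"

definition cg_inf_path :: "(real \<Rightarrow> 'a::topological_space) \<Rightarrow> ('a \<Rightarrow> 'a) \<Rightarrow> ('a \<Rightarrow> 'a)
                   \<Rightarrow> 'a set set \<Rightarrow> (nat \<Rightarrow> 'a set list set) \<Rightarrow> bool" where
  "cg_inf_path h \<tau> F P s \<longleftrightarrow>
     (\<forall>n. s n \<in> cg_vertices h \<tau> F P \<and> cg_arrow h \<tau> F P (s n) (s (Suc n)))"

text \<open>A loop of length n > 0 starting at alpha, given as gamma 0, ..., gamma n.\<close>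
definition cg_loop :: "(real \<Rightarrow> 'a::topological_space) \<Rightarrow> ('a \<Rightarrow> 'a) \<Rightarrow> ('a \<Rightarrow> 'a)
                   \<Rightarrow> 'a set set \<Rightarrow> 'a set list set \<Rightarrow> (nat \<Rightarrow> 'a set list set) \<Rightarrow> nat \<Rightarrow> bool" where
  "cg_loop h \<tau> F P \<alpha> \<gamma> n \<longleftrightarrow>
     0 < n \<and> \<gamma> 0 = \<alpha> \<and> \<gamma> n = \<alpha> \<and>
     (\<forall>i\<le>n. \<gamma> i \<in> cg_vertices h \<tau> F P) \<and>
     (\<forall>i<n. cg_arrow h \<tau> F P (\<gamma> i) (\<gamma> (Suc i)))"

definition loop_repeat :: "(nat \<Rightarrow> 'v) \<Rightarrow> nat \<Rightarrow> nat \<Rightarrow> 'v" where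
  "loop_repeat \<gamma> n = (\<lambda>k. \<gamma> (k mod n))"

definition path_avg :: "(real \<Rightarrow> 'a::topological_space) \<Rightarrow> ('a \<Rightarrow> 'a) \<Rightarrow> ('a \<Rightarrow> 'a)
                   \<Rightarrow> 'a set set \<Rightarrow> ('a set \<Rightarrow> int) \<Rightarrow> (nat \<Rightarrow> 'a set list set) \<Rightarrow> nat \<Rightarrow> real" where
  "path_avg h \<tau> F P p s n = real_of_int (\<Sum>i<n. cg_weight h \<tau> F P p (s i)) / real n"

text \<open>rho of an infinite path (meaningful when the limit exists).\<close>
definition rho :: "(real \<Rightarrow> 'a::topological_space) \<Rightarrow> ('a \<Rightarrow> 'a) \<Rightarrow> ('a \<Rightarrow> 'a)
                   \<Rightarrow> 'a set set \<Rightarrow> ('a set \<Rightarrow> int) \<Rightarrow> (nat \<Rightarrow> 'a set list set) \<Rightarrow> real" where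
  "rho h \<tau> F P p s = lim (path_avg h \<tau> F P p s)"

end

theory Submission
  imports Defs
begin

lemma sum_lessThan_add: fixes a b :: nat shows "(\<Sum>i<a+b. f i) = (\<Sum>i<a. f i) + (\<Sum>i<b. f (a+i))"
  by (induction b) (simp_all add: add.assoc)

lemma sum_mod_mult:
  fixes f :: "nat \<Rightarrow> 'a::comm_semiring_1"
  assumes "0 < n"
  shows "(\<Sum>i<q*n. f (i mod n)) = of_nat q * (\<Sum>i<n. f i)"
proof (induction q)
  case 0 then show ?case by simp
next
  case (Suc q)
  have "(\<Sum>i<Suc q*n. f (i mod n)) = (\<Sum>i<q*n + n. f (i mod n))" by (simp add: add.commute)
  also have "\<dots> = (\<Sum>i<q*n. f (i mod n)) + (\<Sum>i<n. f ((q*n+i) mod n))" by (rule sum_lessThan_add)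
  also have "(\<Sum>i<n. f ((q*n+i) mod n)) = (\<Sum>i<n. f i)"
    by (rule sum.cong) auto
  finally show ?case using Suc by (simp add: algebra_simps)
qed

lemma sum_mod_split:
  fixes f :: "nat \<Rightarrow> real"
  assumes "0 < n"
  shows "(\<Sum>i<m. f (i mod n)) = real (m div n) * (\<Sum>i<n. f i) + (\<Sum>i<m mod n. f i)"
proof -
  have m: "m = (m div n)*n + m mod n" by simp
  have "(\<Sum>i<m. f (i mod n)) = (\<Sum>i<(m div n)*n + m mod n. f (i mod n))" using m by metis
  also have "\<dots> = (\<Sum>i<(m div n)*n. f (i mod n)) + (\<Sum>i<m mod n. f (((m div n)*n+i) mod n))"
    by (rule sum_lessThan_add)
  also have "(\<Sum>i<m mod n. f (((m div n)*n+i) mod n)) = (\<Sum>i<m mod n. f i)"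
  proof (rule sum.cong)
    fix x assume "x \<in> {..<m mod n}"
    then have "x < n" by (meson assms lessThan_iff less_trans mod_less_divisor)
    then show "f (((m div n)*n+x) mod n) = f x" by simp
  qed simp
  finally show ?thesis using sum_mod_mult[OF assms] by simp
qed

lemma periodic_dev:
  fixes f :: "nat \<Rightarrow> real"
  assumes "0 < n"
  shows "\<bar>(\<Sum>i<m. f (i mod n)) - real m * (\<Sum>i<n. f i) / real n\<bar> \<le> (\<Sum>i<n. \<bar>f i\<bar>) + \<bar>\<Sum>i<n. f i\<bar>"
proof -
  define S where "S = (\<Sum>i<n. f i)"
  define q where "q = m div n"
  define r where "r = m mod n"
  have rn: "r < n" using assms r_def by simp
  have m: "real m = real q * real n + real r" unfolding q_def r_def
    by (metis div_mult_mod_eq of_nat_add of_nat_mult)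
  have eq: "(\<Sum>i<m. f (i mod n)) - real m * S / real n = (\<Sum>i<r. f i) - real r * S / real n"
    using sum_mod_split[OF assms, of f m] assms unfolding S_def[symmetric] q_def[symmetric] r_def[symmetric] m
    by (simp add: field_simps)
  have "\<bar>\<Sum>i<r. f i\<bar> \<le> (\<Sum>i<r. \<bar>f i\<bar>)" by (rule sum_abs)
  also have "\<dots> \<le> (\<Sum>i<n. \<bar>f i\<bar>)" by (rule sum_mono2) (use rn in auto)
  finally have 1: "\<bar>\<Sum>i<r. f i\<bar> \<le> (\<Sum>i<n. \<bar>f i\<bar>)" .
  have "\<bar>real r * S / real n\<bar> = real r / real n * \<bar>S\<bar>" by (simp add: abs_mult)
  also have "\<dots> \<le> 1 * \<bar>S\<bar>" by (rule mult_right_mono) (use rn in auto)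
  finally have 2: "\<bar>real r * S / real n\<bar> \<le> \<bar>S\<bar>" by simp
  have "\<bar>(\<Sum>i<m. f (i mod n)) - real m * S / real n\<bar> \<le> (\<Sum>i<n. \<bar>f i\<bar>) + \<bar>S\<bar>"
    unfolding eq using 1 2 by linarith
  then show ?thesis by (simp add: S_def)
qed

lemma lim_from_dev:
  fixes f :: "nat \<Rightarrow> real"
  assumes "\<And>m. \<bar>f m - real m * c\<bar> \<le> B"
  shows "(\<lambda>m. f m / real m) \<longlonglongrightarrow> c"
proof -
  have "(\<lambda>m. (f m - real m * c) / real m) \<longlonglongrightarrow> 0"
  proof (rule Lim_null_comparison)
    show "eventually (\<lambda>m. norm ((f m - real m * c) / real m) \<le> B / real m) sequentially"
      using assms by (intro always_eventually allI) (auto intro!: divide_right_mono)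
    show "(\<lambda>m. B / real m) \<longlonglongrightarrow> 0" by (rule lim_const_over_n)
  qed
  then have "(\<lambda>m. (f m - real m * c) / real m + c) \<longlonglongrightarrow> 0 + c" by (intro tendsto_add) auto
  moreover have "eventually (\<lambda>m. (f m - real m * c) / real m + c = f m / real m) sequentially"
    using eventually_gt_at_top[of 0] by eventually_elim (simp add: field_simps)
  ultimately show ?thesis using Lim_transform_eventually by fastforce
qed

lemma periodic_avg:
  fixes f :: "nat \<Rightarrow> real"
  assumes "0 < n"
  shows "(\<lambda>m. (\<Sum>i<m. f (i mod n)) / real m) \<longlonglongrightarrow> (\<Sum>i<n. f i) / real n"
  by (rule lim_from_dev[where B = "(\<Sum>i<n. \<bar>f i\<bar>) + \<bar>\<Sum>i<n. f i\<bar>"])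
     (use periodic_dev[OF assms] in auto)

definition gloop :: "'v set \<Rightarrow> ('v \<Rightarrow> 'v \<Rightarrow> bool) \<Rightarrow> 'v \<Rightarrow> (nat \<Rightarrow> 'v) \<Rightarrow> nat \<Rightarrow> bool" where
  "gloop V E \<alpha> \<gamma> n \<longleftrightarrow> 0 < n \<and> \<gamma> 0 = \<alpha> \<and> \<gamma> n = \<alpha> \<and> (\<forall>i\<le>n. \<gamma> i \<in> V) \<and> (\<forall>i<n. E (\<gamma> i) (\<gamma> (Suc i)))"

definition lrep :: "(nat \<Rightarrow> 'v) \<Rightarrow> nat \<Rightarrow> nat \<Rightarrow> 'v" where
  "lrep \<gamma> n = (\<lambda>k. \<gamma> (k mod n))"

definition cat :: "(nat \<Rightarrow> 'v) \<Rightarrow> nat \<Rightarrow> (nat \<Rightarrow> 'v) \<Rightarrow> nat \<Rightarrow> 'v" where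
  "cat \<gamma>1 n1 \<gamma>2 = (\<lambda>i. if i \<le> n1 then \<gamma>1 i else \<gamma>2 (i - n1))"

lemma repeat_arrow:
  assumes "gloop V E \<alpha> \<gamma> n"
  shows "E (\<gamma> (i mod n)) (\<gamma> (Suc i mod n))"
proof -
  have n: "0 < n" "\<gamma> 0 = \<alpha>" "\<gamma> n = \<alpha>" "\<forall>i<n. E (\<gamma> i) (\<gamma> (Suc i))"
    using assms unfolding gloop_def by auto
  have lt: "i mod n < n" using n by simp
  show ?thesis
  proof (cases "Suc (i mod n) = n")
    case True
    then have "Suc i mod n = 0" by (simp add: mod_Suc)
    then show ?thesis using n lt True by metis
  next
    case False
    then have "Suc i mod n = Suc (i mod n)" by (simp add: mod_Suc)
    then show ?thesis using n lt by simp
  qed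
qed

lemma repeat_vertex:
  assumes "gloop V E \<alpha> \<gamma> n"
  shows "\<gamma> (i mod n) \<in> V"
  using assms unfolding gloop_def by (simp add: less_imp_le)

lemma repeat_loop:
  assumes "gloop V E \<alpha> \<gamma> n" "0 < k"
  shows "gloop V E \<alpha> (lrep \<gamma> n) (k*n)"
  using assms repeat_arrow[OF assms(1)] repeat_vertex[OF assms(1)]
  unfolding gloop_def lrep_def by auto

lemma cat_loop:
  assumes "gloop V E \<alpha> \<gamma>1 n1" "gloop V E \<alpha> \<gamma>2 n2"
  shows "gloop V E \<alpha> (cat \<gamma>1 n1 \<gamma>2) (n1 + n2)"
proof -
  have c: "\<And>i. n1 \<le> i \<Longrightarrow> cat \<gamma>1 n1 \<gamma>2 i = \<gamma>2 (i - n1)"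
    using assms unfolding cat_def gloop_def by auto
  have c1: "\<And>i. i \<le> n1 \<Longrightarrow> cat \<gamma>1 n1 \<gamma>2 i = \<gamma>1 i" unfolding cat_def by auto
  show ?thesis unfolding gloop_def
  proof (intro conjI allI impI)
    show "0 < n1 + n2" using assms unfolding gloop_def by auto
    show "cat \<gamma>1 n1 \<gamma>2 0 = \<alpha>" using assms c1[of 0] unfolding gloop_def by auto
    show "cat \<gamma>1 n1 \<gamma>2 (n1 + n2) = \<alpha>" using assms c[of "n1+n2"] unfolding gloop_def by auto
    fix i
    show "i \<le> n1 + n2 \<Longrightarrow> cat \<gamma>1 n1 \<gamma>2 i \<in> V"
      using assms c[of i] c1[of i] unfolding gloop_def by (cases "i \<le> n1") auto
    assume "i < n1 + n2"
    then show "E (cat \<gamma>1 n1 \<gamma>2 i) (cat \<gamma>1 n1 \<gamma>2 (Suc i))"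
      using assms c[of i] c[of "Suc i"] c1[of i] c1[of "Suc i"] unfolding gloop_def
      by (cases "i < n1") (auto simp: Suc_diff_le)
  qed
qed

lemma cat_sum:
  assumes "gloop V E \<alpha> \<gamma>1 n1" "gloop V E \<alpha> \<gamma>2 n2"
  shows "(\<Sum>i<n1+n2. w (cat \<gamma>1 n1 \<gamma>2 i)) = (\<Sum>i<n1. w (\<gamma>1 i)) + (\<Sum>i<n2. w (\<gamma>2 i))"
proof -
  have "(\<Sum>i<n1+n2. w (cat \<gamma>1 n1 \<gamma>2 i)) = (\<Sum>i<n1. w (cat \<gamma>1 n1 \<gamma>2 i)) + (\<Sum>i<n2. w (cat \<gamma>1 n1 \<gamma>2 (n1+i)))"
    by (rule sum_lessThan_add)
  also have "(\<Sum>i<n1. w (cat \<gamma>1 n1 \<gamma>2 i)) = (\<Sum>i<n1. w (\<gamma>1 i))"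
    by (rule sum.cong) (auto simp: cat_def)
  also have "(\<Sum>i<n2. w (cat \<gamma>1 n1 \<gamma>2 (n1+i))) = (\<Sum>i<n2. w (\<gamma>2 i))"
    by (rule sum.cong) (use assms in \<open>auto simp: cat_def gloop_def\<close>)
  finally show ?thesis .
qed

lemma repeat_sum:
  fixes w :: "'v \<Rightarrow> 'a::comm_semiring_1"
  assumes "gloop V E \<alpha> \<gamma> n"
  shows "(\<Sum>i<k*n. w (lrep \<gamma> n i)) = of_nat k * (\<Sum>i<n. w (\<gamma> i))"
  unfolding lrep_def by (rule sum_mod_mult[where f="\<lambda>i. w (\<gamma> i)"]) (use assms in \<open>simp add: gloop_def\<close>)

lemma part1:
  fixes w :: "'v \<Rightarrow> int"
  assumes l1: "gloop V E \<alpha> \<gamma>1 n1" and l2: "gloop V E \<alpha> \<gamma>2 n2" and "r \<in> \<rat>"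
    and r1: "real_of_int (\<Sum>i<n1. w (\<gamma>1 i)) / real n1 \<le> r"
    and r2: "r \<le> real_of_int (\<Sum>i<n2. w (\<gamma>2 i)) / real n2"
  shows "\<exists>\<gamma> n. gloop V E \<alpha> \<gamma> n \<and> real_of_int (\<Sum>i<n. w (\<gamma> i)) / real n = r"
proof -
  define S1 where "S1 = (\<Sum>i<n1. w (\<gamma>1 i))"
  define S2 where "S2 = (\<Sum>i<n2. w (\<gamma>2 i))"
  have n1: "n1 > 0" and n2: "n2 > 0" using l1 l2 unfolding gloop_def by auto
  show ?thesis
  proof (cases "real_of_int S1 / real n1 = r \<or> real_of_int S2 / real n2 = r")
    case True
    then show ?thesis using l1 l2 unfolding S1_def S2_def by blast
  next
    case False
    then have lt1: "real_of_int S1 / real n1 < r" and lt2: "r < real_of_int S2 / real n2"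
      using r1 r2 unfolding S1_def S2_def by auto
    obtain a b :: int where b: "b > 0" and r: "r = of_int a / of_int b"
      using Rats_cases'[OF \<open>r \<in> \<rat>\<close>] by metis
    define D1 where "D1 = a * int n1 - b * S1"
    define D2 where "D2 = b * S2 - a * int n2"
    have "real_of_int S1 * real_of_int b < real_of_int a * real n1"
      using lt1 n1 b unfolding r by (simp add: field_simps)
    then have "real_of_int (S1 * b) < real_of_int (a * int n1)" by simp
    then have D1: "D1 > 0" unfolding D1_def of_int_less_iff by (simp add: mult.commute)
    have "real_of_int a * real n2 < real_of_int S2 * real_of_int b"
      using lt2 n2 b unfolding r by (simp add: field_simps)
    then have "real_of_int (a * int n2) < real_of_int (S2 * b)" by simp
    then have D2: "D2 > 0" unfolding D2_def of_int_less_iff by (simp add: mult.commute)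
    define k1 where "k1 = nat D2"
    define k2 where "k2 = nat D1"
    have k1: "k1 > 0" and k2: "k2 > 0" using D1 D2 k1_def k2_def by auto
    have L1: "gloop V E \<alpha> (lrep \<gamma>1 n1) (k1*n1)" by (rule repeat_loop[OF l1 k1])
    have L2: "gloop V E \<alpha> (lrep \<gamma>2 n2) (k2*n2)" by (rule repeat_loop[OF l2 k2])
    define \<gamma> where "\<gamma> = cat (lrep \<gamma>1 n1) (k1*n1) (lrep \<gamma>2 n2)"
    have L: "gloop V E \<alpha> \<gamma> (k1*n1 + k2*n2)" unfolding \<gamma>_def by (rule cat_loop[OF L1 L2])
    have S: "(\<Sum>i<k1*n1 + k2*n2. w (\<gamma> i)) = int k1 * S1 + int k2 * S2"
      unfolding \<gamma>_def cat_sum[OF L1 L2] repeat_sum[OF l1] repeat_sum[OF l2] S1_def S2_def by simp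
    have key: "b * (int k1 * S1 + int k2 * S2) = a * int (k1*n1 + k2*n2)"
      using D1 D2 unfolding k1_def k2_def D1_def D2_def by (simp add: algebra_simps)
    have "real_of_int (b * (int k1 * S1 + int k2 * S2)) = real_of_int (a * int (k1*n1 + k2*n2))"
      using key by simp
    then have "real_of_int (int k1 * S1 + int k2 * S2) / real (k1*n1 + k2*n2) = r"
    proof -
      have "k1*n1 + k2*n2 > 0" using k1 n1 by simp
      then have pos: "real (k1*n1 + k2*n2) > 0" by linarith
      show ?thesis using pos b \<open>real_of_int (b * _) = _\<close> unfolding r
        by (simp add: divide_simps) (simp add: algebra_simps)
    qed
    then show ?thesis using L S by metis
  qed
qed

definition idx :: "(nat \<Rightarrow> nat) \<Rightarrow> nat \<Rightarrow> nat" where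
  "idx T t = (LEAST k. t < T (Suc k))"

lemma idx_bounds:
  assumes "T 0 = 0" "\<And>k. T k < T (Suc k)"
  shows "T (idx T t) \<le> t \<and> t < T (Suc (idx T t))"
proof -
  have sm: "strict_mono T" using assms(2) by (simp add: strict_mono_Suc_iff)
  have "Suc t \<le> T (Suc t)" using strict_mono_imp_increasing[OF sm] by blast
  then have "t < T (Suc t)" by simp
  then have 1: "t < T (Suc (idx T t))" unfolding idx_def by (rule LeastI)
  have 2: "T (idx T t) \<le> t"
  proof (cases "idx T t")
    case 0 then show ?thesis using assms by simp
  next
    case (Suc j)
    then have "\<not> t < T (Suc j)" unfolding idx_def using not_less_Least[of j "\<lambda>k. t < T (Suc k)"]
      by (metis lessI)
    then show ?thesis using Suc by simp
  qed
  show ?thesis using 1 2 by simp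
qed

lemma idx_eq:
  assumes "T 0 = 0" "\<And>k. T k < T (Suc k)" "T k \<le> t" "t < T (Suc k)"
  shows "idx T t = k"
proof -
  have sm: "strict_mono T" using assms(2) by (simp add: strict_mono_Suc_iff)
  show ?thesis unfolding idx_def
  proof (rule Least_equality)
    show "t < T (Suc k)" by fact
    fix y assume "t < T (Suc y)"
    show "k \<le> y"
    proof (rule ccontr)
      assume "\<not> k \<le> y"
      then have "Suc y \<le> k" by simp
      then have "T (Suc y) \<le> T k" using sm by (simp add: strict_mono_less_eq)
      then show False using \<open>t < T (Suc y)\<close> assms(3) by simp
    qed
  qed
qed

lemma idx_ge:
  assumes "T 0 = 0" "\<And>k. T k < T (Suc k)" "T Z \<le> t"
  shows "Z \<le> idx T t"
proof (rule ccontr)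
  have sm: "strict_mono T" using assms(2) by (simp add: strict_mono_Suc_iff)
  assume "\<not> Z \<le> idx T t"
  then have "Suc (idx T t) \<le> Z" by simp
  then have "T (Suc (idx T t)) \<le> T Z" using sm by (simp add: strict_mono_less_eq)
  then show False using idx_bounds[OF assms(1,2), of t] assms(3) by simp
qed

lemma idx_tendsto:
  assumes "T 0 = 0" "\<And>k. T k < T (Suc k)"
  shows "filterlim (idx T) at_top sequentially"
  unfolding filterlim_at_top
proof
  fix Z
  show "eventually (\<lambda>t. Z \<le> idx T t) sequentially"
    using eventually_ge_at_top[of "T Z"] by eventually_elim (rule idx_ge[OF assms])
qed

primrec Tf :: "(nat \<Rightarrow> nat) \<Rightarrow> (nat \<Rightarrow> real) \<Rightarrow> nat \<Rightarrow> nat" where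
  "Tf N C 0 = 0"
| "Tf N C (Suc k) = Tf N C k + N k * (Suc k * (Tf N C k + nat \<lceil>C (Suc k)\<rceil> + 1))"

lemma part2:
  fixes w :: "'v \<Rightarrow> int" and \<gamma> :: "nat \<Rightarrow> nat \<Rightarrow> 'v"
  assumes loops: "\<And>k. gloop V E \<alpha> (\<gamma> k) (N k)"
    and lim: "(\<lambda>k. real_of_int (\<Sum>i<N k. w (\<gamma> k i)) / real (N k)) \<longlonglongrightarrow> s"
  shows "\<exists>\<sigma>. (\<forall>n. \<sigma> n \<in> V \<and> E (\<sigma> n) (\<sigma> (Suc n))) \<and> \<sigma> 0 = \<alpha> \<and> (\<exists>\<^sub>\<infinity>n. \<sigma> n = \<alpha>) \<and>
          (\<lambda>n. real_of_int (\<Sum>i<n. w (\<sigma> i)) / real n) \<longlonglongrightarrow> s"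
proof -
  define wr where "wr = (\<lambda>v. real_of_int (w v))"
  define S where "S = (\<lambda>k. \<Sum>i<N k. wr (\<gamma> k i))"
  define d where "d = (\<lambda>k. S k / real (N k) - s)"
  define C where "C = (\<lambda>k. (\<Sum>i<N k. \<bar>wr (\<gamma> k i)\<bar>) + \<bar>S k\<bar>)"
  define T where "T = Tf N C"
  define m where "m = (\<lambda>k. Suc k * (T k + nat \<lceil>C (Suc k)\<rceil> + 1))"
  define L where "L = (\<lambda>k. N k * m k)"
  have Npos: "\<And>k. 0 < N k" using loops unfolding gloop_def by auto
  have TS: "\<And>k. T (Suc k) = T k + L k" unfolding T_def L_def m_def by simp
  have Lpos: "\<And>k. 0 < L k" unfolding L_def m_def using Npos by simp
  have T0: "T 0 = 0" unfolding T_def by simp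
  have Tinc: "\<And>k. T k < T (Suc k)" using TS Lpos by (simp add: less_add_same_cancel1)
  have sm: "strict_mono T" using Tinc by (simp add: strict_mono_Suc_iff)
  have Cnn: "\<And>k. 0 \<le> C k" unfolding C_def by (auto intro!: add_nonneg_nonneg sum_nonneg)
  have Lbig: "\<And>k. real (Suc k) * (real (T k) + C (Suc k) + 1) \<le> real (L k)"
  proof -
    fix k
    have "real (Suc k) * (real (T k) + C (Suc k) + 1) \<le> real (Suc k) * (real (T k) + real (nat \<lceil>C (Suc k)\<rceil>) + 1)"
      by (intro mult_left_mono add_mono order_refl real_nat_ceiling_ge) auto
    also have "\<dots> = real (m k)" unfolding m_def by (simp add: algebra_simps)
    also have "\<dots> \<le> real (L k)" unfolding L_def using Npos[of k] by (simp del: of_nat_mult)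
    finally show "real (Suc k) * (real (T k) + C (Suc k) + 1) \<le> real (L k)" .
  qed
  define \<sigma> where "\<sigma> = (\<lambda>t. \<gamma> (idx T t) ((t - T (idx T t)) mod N (idx T t)))"
  have blk: "\<And>k j. j < L k \<Longrightarrow> \<sigma> (T k + j) = \<gamma> k (j mod N k)"
  proof -
    fix k j assume "j < L k"
    then have "idx T (T k + j) = k" by (intro idx_eq[OF T0 Tinc]) (auto simp: TS)
    then show "\<sigma> (T k + j) = \<gamma> k (j mod N k)" unfolding \<sigma>_def by simp
  qed
  have stepeq: "\<And>t. \<sigma> (Suc t) = \<gamma> (idx T t) (Suc (t - T (idx T t)) mod N (idx T t))"
  proof -
    fix t
    define k where "k = idx T t"
    have b: "T k \<le> t" "t < T (Suc k)" using idx_bounds[OF T0 Tinc, of t] k_def by auto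
    show "\<sigma> (Suc t) = \<gamma> (idx T t) (Suc (t - T (idx T t)) mod N (idx T t))"
    proof (cases "Suc t < T (Suc k)")
      case True
      then have "\<sigma> (Suc t) = \<sigma> (T k + Suc (t - T k))" using b by (simp add: Suc_diff_le)
      also have "\<dots> = \<gamma> k (Suc (t - T k) mod N k)" using True b by (intro blk) (simp add: TS)
      finally show ?thesis unfolding k_def .
    next
      case False
      then have eq: "Suc t = T (Suc k)" using b by simp
      have "\<sigma> (Suc t) = \<sigma> (T (Suc k) + 0)" using eq by simp
      also have "\<dots> = \<gamma> (Suc k) 0" using Lpos by (subst blk) auto
      also have "\<dots> = \<alpha>" using loops unfolding gloop_def by simp
      finally have 1: "\<sigma> (Suc t) = \<alpha>" .
      have "Suc (t - T k) = L k" using eq b TS by simp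
      then have "Suc (t - T k) mod N k = 0" unfolding L_def by simp
      then have "\<gamma> k (Suc (t - T k) mod N k) = \<alpha>" using loops unfolding gloop_def by simp
      then show ?thesis using 1 unfolding k_def by simp
    qed
  qed
  have path: "\<forall>n. \<sigma> n \<in> V \<and> E (\<sigma> n) (\<sigma> (Suc n))"
    using repeat_vertex[OF loops] repeat_arrow[OF loops] stepeq unfolding \<sigma>_def by metis
  have \<sigma>T: "\<And>k. \<sigma> (T k) = \<alpha>"
    using blk[of 0] Lpos loops unfolding gloop_def by (metis add_0_right mod_0)
  have \<sigma>0: "\<sigma> 0 = \<alpha>" using \<sigma>T[of 0] T0 by simp
  have inf: "\<exists>\<^sub>\<infinity>n. \<sigma> n = \<alpha>"
    unfolding INFM_iff_infinite
  proof (rule infinite_super)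
    show "range T \<subseteq> {n. \<sigma> n = \<alpha>}" using \<sigma>T by auto
    have "inj T" using sm by (metis strict_mono_eq injI)
    then show "infinite (range T)" by (rule range_inj_infinite)
  qed
  have Tsum: "\<And>k. real (T k) = (\<Sum>l<k. real (L l))"
  proof -
    fix k show "real (T k) = (\<Sum>l<k. real (L l))" by (induction k) (simp_all add: T0 TS)
  qed
  have blocksum: "\<And>k. (\<Sum>i<L k. wr (\<sigma> (T k + i))) = real (m k) * S k"
  proof -
    fix k
    have "(\<Sum>i<L k. wr (\<sigma> (T k + i))) = (\<Sum>i<m k * N k. wr (\<gamma> k (i mod N k)))"
      unfolding L_def by (rule sum.cong) (auto simp: mult.commute blk[unfolded L_def])
    also have "\<dots> = real (m k) * S k" unfolding S_def
      by (rule sum_mod_mult[where f="\<lambda>i. wr (\<gamma> k i)"]) (rule Npos)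
    finally show "(\<Sum>i<L k. wr (\<sigma> (T k + i))) = real (m k) * S k" .
  qed
  have sumT: "\<And>k. (\<Sum>i<T k. wr (\<sigma> i)) = (\<Sum>l<k. real (m l) * S l)"
  proof -
    fix k show "(\<Sum>i<T k. wr (\<sigma> i)) = (\<Sum>l<k. real (m l) * S l)"
    proof (induction k)
      case 0 then show ?case by (simp add: T0)
    next
      case (Suc k)
      have "(\<Sum>i<T (Suc k). wr (\<sigma> i)) = (\<Sum>i<T k. wr (\<sigma> i)) + (\<Sum>i<L k. wr (\<sigma> (T k + i)))"
        unfolding TS by (rule sum_lessThan_add)
      then show ?case using Suc blocksum by simp
    qed
  qed
  have mS: "\<And>l. real (m l) * S l - real (L l) * s = real (L l) * d l"
  proof -
    fix l have "real (N l) \<noteq> 0" using Npos[of l] by simp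
    then show "real (m l) * S l - real (L l) * s = real (L l) * d l"
      unfolding d_def L_def by (simp add: field_simps)
  qed
  have Dev: "\<And>t. (\<Sum>i<t. wr (\<sigma> i)) - real t * s = (\<Sum>l<idx T t. real (L l) * d l) +
       ((\<Sum>i<t - T (idx T t). wr (\<gamma> (idx T t) (i mod N (idx T t)))) - real (t - T (idx T t)) * s)"
  proof -
    fix t
    define k where "k = idx T t"
    define j where "j = t - T k"
    have b: "T k \<le> t" "t < T (Suc k)" using idx_bounds[OF T0 Tinc, of t] k_def by auto
    have t: "t = T k + j" using b j_def by simp
    have jL: "j < L k" using b t TS by simp
    have "(\<Sum>i<t. wr (\<sigma> i)) = (\<Sum>i<T k. wr (\<sigma> i)) + (\<Sum>i<j. wr (\<sigma> (T k + i)))"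
      unfolding t by (rule sum_lessThan_add)
    also have "(\<Sum>i<j. wr (\<sigma> (T k + i))) = (\<Sum>i<j. wr (\<gamma> k (i mod N k)))"
      by (rule sum.cong) (use jL blk in auto)
    finally have 1: "(\<Sum>i<t. wr (\<sigma> i)) = (\<Sum>l<k. real (m l) * S l) + (\<Sum>i<j. wr (\<gamma> k (i mod N k)))"
      using sumT by simp
    have 2: "real t * s = (\<Sum>l<k. real (L l) * s) + real j * s"
      unfolding t by (simp add: Tsum sum_distrib_right sum_distrib_left algebra_simps)
    have 3: "(\<Sum>l<k. real (m l) * S l) - (\<Sum>l<k. real (L l) * s) = (\<Sum>l<k. real (L l) * d l)"
      unfolding sum_subtractf[symmetric] using mS by simp
    show "(\<Sum>i<t. wr (\<sigma> i)) - real t * s = (\<Sum>l<idx T t. real (L l) * d l) +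
       ((\<Sum>i<t - T (idx T t). wr (\<gamma> (idx T t) (i mod N (idx T t)))) - real (t - T (idx T t)) * s)"
      unfolding k_def[symmetric] j_def[symmetric] 1 2 using 3 by simp
  qed
  have partial: "\<And>k j. \<bar>(\<Sum>i<j. wr (\<gamma> k (i mod N k))) - real j * s\<bar> \<le> C k + real j * \<bar>d k\<bar>"
  proof -
    fix k j
    have p: "\<bar>(\<Sum>i<j. wr (\<gamma> k (i mod N k))) - real j * S k / real (N k)\<bar> \<le> C k"
      unfolding S_def C_def by (rule periodic_dev[where f="\<lambda>i. wr (\<gamma> k i)"]) (rule Npos)
    have "(\<Sum>i<j. wr (\<gamma> k (i mod N k))) - real j * s =
          ((\<Sum>i<j. wr (\<gamma> k (i mod N k))) - real j * S k / real (N k)) + real j * d k"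
      unfolding d_def by (simp add: algebra_simps)
    moreover have "\<bar>real j * d k\<bar> = real j * \<bar>d k\<bar>" by (simp add: abs_mult)
    ultimately show "\<bar>(\<Sum>i<j. wr (\<gamma> k (i mod N k))) - real j * s\<bar> \<le> C k + real j * \<bar>d k\<bar>"
      using p by (smt (verit))
  qed
  have Seq: "\<And>k. S k = real_of_int (\<Sum>i<N k. w (\<gamma> k i))" unfolding S_def wr_def by simp
  have dlim: "d \<longlonglongrightarrow> 0" unfolding d_def Seq using LIM_zero[OF lim] .
  obtain Eb where Eb: "Eb > 0" "\<And>l. \<bar>d l\<bar> \<le> Eb"
  proof -
    have "Bseq d" using convergent_imp_Bseq[of d] dlim by (auto simp: convergent_def)
    then show ?thesis using that by (auto elim!: BseqE)
  qed
  define g where "g = (\<lambda>k. (Eb+1) / real k + \<bar>d (k - 1)\<bar> + \<bar>d k\<bar>)"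
  have glim: "g \<longlonglongrightarrow> 0"
  proof -
    have a: "(\<lambda>k. (Eb+1) / real k) \<longlonglongrightarrow> 0" by (rule lim_const_over_n)
    have "(\<lambda>k. \<bar>d (Suc k - 1)\<bar>) \<longlonglongrightarrow> 0" using tendsto_rabs_zero[OF dlim] by simp
    then have b: "(\<lambda>k. \<bar>d (k - 1)\<bar>) \<longlonglongrightarrow> 0" by (rule LIMSEQ_imp_Suc)
    have c: "(\<lambda>k. \<bar>d k\<bar>) \<longlonglongrightarrow> 0" using tendsto_rabs_zero[OF dlim] .
    show ?thesis unfolding g_def using tendsto_add[OF tendsto_add[OF a b] c] by simp
  qed
  have bound: "\<And>t. T 1 \<le> t \<Longrightarrow> norm (((\<Sum>i<t. wr (\<sigma> i)) - real t * s) / real t) \<le> g (idx T t)"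
  proof -
    fix t assume t1: "T 1 \<le> t"
    define k where "k = idx T t"
    have "1 \<le> k" using idx_ge[OF T0 Tinc t1] k_def by simp
    then obtain k' where k': "k = Suc k'" by (cases k) auto
    define j where "j = t - T k"
    have b: "T k \<le> t" using idx_bounds[OF T0 Tinc, of t] k_def by auto
    have tj: "real t = real (T k') + real (L k') + real j" using b TS k' j_def by simp
    define A where "A = (\<Sum>l<k. real (L l) * d l)"
    define B where "B = (\<Sum>i<j. wr (\<gamma> k (i mod N k))) - real j * s"
    have DevAB: "(\<Sum>i<t. wr (\<sigma> i)) - real t * s = A + B"
      using Dev[of t] unfolding A_def B_def j_def k_def .
    have "\<bar>A\<bar> \<le> (\<Sum>l<k. real (L l) * \<bar>d l\<bar>)" unfolding A_def
      by (rule order_trans[OF sum_abs]) (simp add: abs_mult)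
    also have "\<dots> = (\<Sum>l<k'. real (L l) * \<bar>d l\<bar>) + real (L k') * \<bar>d k'\<bar>" unfolding k' by simp
    also have "(\<Sum>l<k'. real (L l) * \<bar>d l\<bar>) \<le> (\<Sum>l<k'. real (L l) * Eb)"
      by (intro sum_mono mult_left_mono Eb) auto
    also have "(\<Sum>l<k'. real (L l) * Eb) = Eb * real (T k')"
      by (simp add: Tsum sum_distrib_left mult.commute)
    finally have Ab: "\<bar>A\<bar> \<le> Eb * real (T k') + real (L k') * \<bar>d k'\<bar>" by simp
    have Bb: "\<bar>B\<bar> \<le> C k + real j * \<bar>d k\<bar>" unfolding B_def by (rule partial)
    have Lb: "real k * (real (T k') + C k + 1) \<le> real (L k')" using Lbig[of k'] k' by simp
    have tL: "real (L k') \<le> real t" and tj2: "real j \<le> real t" using tj by simp_all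
    have kpos: "0 < real k" using k' by simp
    have tpos: "0 < real t" using tL Lpos[of k'] by linarith
    have key1: "Eb * real (T k') + C k \<le> (Eb+1) / real k * real t"
    proof -
      have e: "0 \<le> Eb * C k" using Eb(1) Cnn[of k] by simp
      have "Eb * real (T k') + C k \<le> (Eb+1) * (real (T k') + C k + 1)"
        using e Eb(1) by (simp add: algebra_simps)
      also have "\<dots> = (Eb+1) / real k * (real k * (real (T k') + C k + 1))" using kpos by simp
      also have "\<dots> \<le> (Eb+1) / real k * real t"
        using Lb tL Eb(1) kpos by (intro mult_left_mono) auto
      finally show ?thesis .
    qed
    have key2: "real (L k') * \<bar>d k'\<bar> \<le> \<bar>d k'\<bar> * real t" using tL by (metis abs_ge_zero mult.commute mult_left_mono)
    have key3: "real j * \<bar>d k\<bar> \<le> \<bar>d k\<bar> * real t" using tj2 by (metis abs_ge_zero mult.commute mult_left_mono)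
    have gk: "g k * real t = (Eb+1) / real k * real t + \<bar>d k'\<bar> * real t + \<bar>d k\<bar> * real t"
      unfolding g_def using k' by (simp add: algebra_simps)
    have "\<bar>A + B\<bar> \<le> g k * real t" unfolding gk using Ab Bb key1 key2 key3 by linarith
    then have "\<bar>A + B\<bar> / real t \<le> g k" using tpos by (simp add: divide_simps)
    then show "norm (((\<Sum>i<t. wr (\<sigma> i)) - real t * s) / real t) \<le> g (idx T t)"
      unfolding DevAB k_def[symmetric] using tpos by simp
  qed
  have "(\<lambda>t. ((\<Sum>i<t. wr (\<sigma> i)) - real t * s) / real t) \<longlonglongrightarrow> 0"
  proof (rule Lim_null_comparison)
    show "eventually (\<lambda>t. norm (((\<Sum>i<t. wr (\<sigma> i)) - real t * s) / real t) \<le> g (idx T t)) sequentially"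
      using eventually_ge_at_top[of "T 1"] by eventually_elim (rule bound)
    show "(\<lambda>t. g (idx T t)) \<longlonglongrightarrow> 0" by (rule filterlim_compose[OF glim idx_tendsto[OF T0 Tinc]])
  qed
  then have "(\<lambda>t. ((\<Sum>i<t. wr (\<sigma> i)) - real t * s) / real t + s) \<longlonglongrightarrow> 0 + s"
    by (intro tendsto_add) auto
  moreover have "eventually (\<lambda>t. ((\<Sum>i<t. wr (\<sigma> i)) - real t * s) / real t + s =
                  real_of_int (\<Sum>i<t. w (\<sigma> i)) / real t) sequentially"
    using eventually_gt_at_top[of 0] by eventually_elim (simp add: field_simps wr_def)
  ultimately have "(\<lambda>t. real_of_int (\<Sum>i<t. w (\<sigma> i)) / real t) \<longlonglongrightarrow> s"
    using Lim_transform_eventually by fastforce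
  then show ?thesis using path \<sigma>0 inf by blast
qed

lemma cg_loop_gloop: "cg_loop h \<tau> F P \<alpha> \<gamma> n = gloop (cg_vertices h \<tau> F P) (cg_arrow h \<tau> F P) \<alpha> \<gamma> n"
  unfolding cg_loop_def gloop_def by simp

lemma path_avg_eq: "path_avg h \<tau> F P p \<sigma> = (\<lambda>n. real_of_int (\<Sum>i<n. cg_weight h \<tau> F P p (\<sigma> i)) / real n)"
  unfolding path_avg_def by (rule ext) simp

lemma rep_avg:
  fixes w :: "'v \<Rightarrow> int"
  assumes "gloop V E \<alpha> \<gamma> n"
  shows "(\<lambda>m. real_of_int (\<Sum>i<m. w (loop_repeat \<gamma> n i)) / real m) \<longlonglongrightarrow> real_of_int (\<Sum>i<n. w (\<gamma> i)) / real n"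
proof -
  have n: "0 < n" using assms unfolding gloop_def by simp
  show ?thesis using periodic_avg[OF n, of "\<lambda>i. real_of_int (w (\<gamma> i))"]
    by (simp add: loop_repeat_def)
qed

theorem mainTheorem14:
  fixes h :: "real \<Rightarrow> 'a::topological_space" and \<tau> F :: "'a \<Rightarrow> 'a"
    and \<Lambda> :: "'b set" and \<phi> :: "'b \<Rightarrow> real \<Rightarrow> 'a"
    and P :: "'a set set" and lab :: "'a set \<Rightarrow> 'b" and p :: "'a set \<Rightarrow> int"
  assumes "lifted_graph h \<tau>"
    and "continuous_on UNIV F"
    and "\<forall>x. F (\<tau> x) = \<tau> (F x)"
    and "sun_like h F \<Lambda> \<phi>"
    and "basic_partition h \<tau> F \<Lambda> \<phi> P lab p"
  shows
    "(\<forall>\<alpha> \<gamma>1 n1 \<gamma>2 n2 r.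
        cg_loop h \<tau> F P \<alpha> \<gamma>1 n1 \<and> cg_loop h \<tau> F P \<alpha> \<gamma>2 n2 \<and> r \<in> \<rat> \<and>
        rho h \<tau> F P p (loop_repeat \<gamma>1 n1) \<le> r \<and> r \<le> rho h \<tau> F P p (loop_repeat \<gamma>2 n2)
        \<longrightarrow> (\<exists>\<gamma> n. cg_loop h \<tau> F P \<alpha> \<gamma> n \<and>
                    path_avg h \<tau> F P p (loop_repeat \<gamma> n) \<longlonglongrightarrow> r))
     \<and>
     (\<forall>\<alpha> \<gamma> N s.
        \<alpha> \<in> cg_vertices h \<tau> F P \<and> (\<forall>k. cg_loop h \<tau> F P \<alpha> (\<gamma> k) (N k)) \<and>
        (\<lambda>k. rho h \<tau> F P p (loop_repeat (\<gamma> k) (N k))) \<longlonglongrightarrow> s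
        \<longrightarrow> (\<exists>\<sigma>. cg_inf_path h \<tau> F P \<sigma> \<and> \<sigma> 0 = \<alpha> \<and> (\<exists>\<^sub>\<infinity>n. \<sigma> n = \<alpha>) \<and>
                  path_avg h \<tau> F P p \<sigma> \<longlonglongrightarrow> s))"
proof (intro conjI allI impI)
  fix \<alpha> \<gamma>1 n1 \<gamma>2 n2 r
  assume H: "cg_loop h \<tau> F P \<alpha> \<gamma>1 n1 \<and> cg_loop h \<tau> F P \<alpha> \<gamma>2 n2 \<and> r \<in> \<rat> \<and>
        rho h \<tau> F P p (loop_repeat \<gamma>1 n1) \<le> r \<and> r \<le> rho h \<tau> F P p (loop_repeat \<gamma>2 n2)"
  let ?W = "cg_weight h \<tau> F P p"
  have l1: "gloop (cg_vertices h \<tau> F P) (cg_arrow h \<tau> F P) \<alpha> \<gamma>1 n1"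
    and l2: "gloop (cg_vertices h \<tau> F P) (cg_arrow h \<tau> F P) \<alpha> \<gamma>2 n2"
    using H cg_loop_gloop by metis+
  have rho1: "rho h \<tau> F P p (loop_repeat \<gamma>1 n1) = real_of_int (\<Sum>i<n1. ?W (\<gamma>1 i)) / real n1"
    unfolding rho_def path_avg_eq by (rule limI) (rule rep_avg[OF l1])
  have rho2: "rho h \<tau> F P p (loop_repeat \<gamma>2 n2) = real_of_int (\<Sum>i<n2. ?W (\<gamma>2 i)) / real n2"
    unfolding rho_def path_avg_eq by (rule limI) (rule rep_avg[OF l2])
  obtain \<gamma> n where L: "gloop (cg_vertices h \<tau> F P) (cg_arrow h \<tau> F P) \<alpha> \<gamma> n"
    and A: "real_of_int (\<Sum>i<n. ?W (\<gamma> i)) / real n = r"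
    using part1[OF l1 l2, of r ?W] H rho1 rho2 by auto
  show "\<exists>\<gamma> n. cg_loop h \<tau> F P \<alpha> \<gamma> n \<and> path_avg h \<tau> F P p (loop_repeat \<gamma> n) \<longlonglongrightarrow> r"
    using L rep_avg[OF L, of ?W] A unfolding cg_loop_gloop path_avg_eq by metis
next
  fix \<alpha> \<gamma> N s
  assume H: "\<alpha> \<in> cg_vertices h \<tau> F P \<and> (\<forall>k. cg_loop h \<tau> F P \<alpha> (\<gamma> k) (N k)) \<and>
        (\<lambda>k. rho h \<tau> F P p (loop_repeat (\<gamma> k) (N k))) \<longlonglongrightarrow> s"
  let ?W = "cg_weight h \<tau> F P p"
  have l: "\<And>k. gloop (cg_vertices h \<tau> F P) (cg_arrow h \<tau> F P) \<alpha> (\<gamma> k) (N k)"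
    using H cg_loop_gloop by metis
  have rhok: "\<And>k. rho h \<tau> F P p (loop_repeat (\<gamma> k) (N k)) = real_of_int (\<Sum>i<N k. ?W (\<gamma> k i)) / real (N k)"
    unfolding rho_def path_avg_eq by (rule limI) (rule rep_avg[OF l])
  have lim: "(\<lambda>k. real_of_int (\<Sum>i<N k. ?W (\<gamma> k i)) / real (N k)) \<longlonglongrightarrow> s"
    using H unfolding rhok by simp
  obtain \<sigma> where "(\<forall>n. \<sigma> n \<in> cg_vertices h \<tau> F P \<and> cg_arrow h \<tau> F P (\<sigma> n) (\<sigma> (Suc n)))"
    "\<sigma> 0 = \<alpha>" "(\<exists>\<^sub>\<infinity>n. \<sigma> n = \<alpha>)" "(\<lambda>n. real_of_int (\<Sum>i<n. ?W (\<sigma> i)) / real n) \<longlonglongrightarrow> s"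
    using part2[OF l lim] by blast
  then show "\<exists>\<sigma>. cg_inf_path h \<tau> F P \<sigma> \<and> \<sigma> 0 = \<alpha> \<and> (\<exists>\<^sub>\<infinity>n. \<sigma> n = \<alpha>) \<and>
                  path_avg h \<tau> F P p \<sigma> \<longlonglongrightarrow> s"
    unfolding cg_inf_path_def path_avg_eq by blast
qed

end
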